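(* Consider a Boolean control network $\mathbf{x}(t+1)=L\ltimes\mathbf{u}(t)\ltimes\mathbf{x}(t)$, $\mathbf{y}(t)=H\mathbf{x}(t)$, with $L\in\mathcal{L}_{N\times NM}$, $H\in\mathcal{L}_{P\times N}$, a periodic reference output trajectory of minimal period $T\ge1$, $\mathbf{y}_r(s+kT)=\delta_P^{i_s}$ ($s\in[1,T]$, $k\in\mathbb{Z}_+$), and an initial state $\mathbf{x}_0\in\mathcal{L}_N$ from which the periodic trajectory is trackable (i.e. there exists $\{\mathbf{u}(t)\}_{t\in\mathbb{Z}_+}\subset\mathcal{L}_M$ such that the state trajectory with $\mathbf{x}(0)=\mathbf{x}_0$ satisfies $H\mathbf{x}(t)=\mathbf{y}_r(t)$ for all $t\ge1$). Let $\mathbf{v}(t)=H^\top\mathbf{y}_r(t)$ for $t\in[1,T+1]$, $L_{tot}=L_1\vee\cdots\vee L_M$, $\boldsymbol{\alpha}(1)=\mathbf{v}(1)$, $\boldsymbol{\alpha}(t)=\mathbf{v}(t)\odot(L_{tot}\boldsymbol{\alpha}(t-1))$ for $t\in[2,T+1]$; $\boldsymbol{\beta}_1(T+1)=\boldsymbol{\alpha}(T+1)$, $\boldsymbol{\beta}_1(t)=\boldsymbol{\alpha}(t)\odot(L_{tot}^\top\boldsymbol{\beta}_1(t+1))$ for $t=T,\dots,1$; for $k\ge2$, $\boldsymbol{\beta}_k(T+1)=\boldsymbol{\beta}_{k-1}(T+1)\odot\boldsymbol{\beta}_{k-1}(1)$ and $\boldsymbol{\beta}_k(t)=\boldsymbol{\beta}_{k-1}(t)\odot(L_{tot}^\top\boldsymbol{\beta}_k(t+1))$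 for $t=T,\dots,1$. Let $\mathcal{X}_t^{(k)}=\{\delta_N^j:[\boldsymbol{\beta}_k(t)]_j\neq0\}$ and let $k^*$ be the smallest $k\ge1$ with $\mathcal{X}_{T+1}^{(k)}\subseteq\mathcal{X}_1^{(k)}$ or $\mathcal{X}_1^{(k)}=\emptyset$; write $\boldsymbol{\beta}=\boldsymbol{\beta}_{k^*}$. Define $$\mathcal{T}_{xu}(0)=\{(\delta_N^j,\delta_M^i):(L\ltimes\delta_M^i\ltimes\delta_N^j)\odot\boldsymbol{\beta}(1)\neq\mathbf{0}_N\},$$ $$\mathcal{T}_{xu}(t)=\{(\delta_N^j,\delta_M^i):[\boldsymbol{\beta}(t)]_j\neq0\text{ and }(L\ltimes\delta_M^i\ltimes\delta_N^j)\odot\boldsymbol{\beta}(t+1)\neq\mathbf{0}_N\},\quad t\in[1,T-1],$$ and $\mathcal{T}_u(t,\mathbf{x})=\{\mathbf{u}\in\mathcal{L}_M:(\mathbf{x},\mathbf{u})\in\mathcal{T}_{xu}(t)\}$. Then an input sequence $\{\mathbf{u}(t)\}_{t\in\mathbb{Z}_+}$ ensuring tracking of the periodic trajectory from $\mathbf{x}_0$ is obtained by the recursive procedure: for $t=0,1,2,\dots$, choose $\mathbf{u}_t\in\mathcal{T}_u(t\bmod T,\mathbf{x}_t)$ and set $\mathbf{x}_{t+1}=L\ltimes\mathbf{u}_t\ltimes\mathbf{x}_t$, with $\mathbf{u}(t)=\mathbf{u}_t$.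
   Context: $\delta_k^i$ is the $i$-th canonical vector of $\mathbb{R}^k$; $\mathcal{L}_k$ is the set of canonical vectors of $\mathbb{R}^k$; $\mathcal{L}_{k\times q}$ the set of $k\times q$ matrices whose columns lie in $\mathcal{L}_k$. $N=2^n$, $M=2^m$, $P=2^p$. $L=[L_1|\cdots|L_M]$ with $L_i\in\mathcal{L}_{N\times N}$, and $L\ltimes\delta_M^i\ltimes\mathbf{x}=L_i\mathbf{x}$. $\vee$ is entrywise Boolean OR, $\odot$ is the entrywise (Hadamard) product, matrix–vector products are ordinary (only zero/nonzero patterns matter), $[\mathbf{w}]_j$ is the $j$-th entry, $\mathbf{0}_N$ the zero vector, and $t\bmod T$ is the remainder of the Euclidean division of $t$ by $T$. *)

theory Defs
  imports Main
begin

(* Conventions (0-based indices):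
   - a canonical vector delta_K^(j+1) is represented by its index j < K;
   - a logical matrix A in L_{K x Q} is represented by its column map
     A :: nat => nat, column c (c < Q) being delta_K^(A c + 1);
   - a Boolean (zero/nonzero pattern) vector of length N is nat => bool,
     entries with index >= N being False.
   L = [L_1|...|L_M], hence  L |x delta_M^(i+1) |x delta_N^(j+1) is column i*N+j. *)

definition nxt :: "nat \<Rightarrow> (nat \<Rightarrow> nat) \<Rightarrow> nat \<Rightarrow> nat \<Rightarrow> nat" where
  "nxt N L i j = L (i * N + j)"

fun traj :: "nat \<Rightarrow> (nat \<Rightarrow> nat) \<Rightarrow> nat \<Rightarrow> (nat \<Rightarrow> nat) \<Rightarrow> nat \<Rightarrow> nat" where
  "traj N L x0 u 0 = x0"
| "traj N L x0 u (Suc t) = nxt N L (u t) (traj N L x0 u t)"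

definition Ltot_mul :: "nat \<Rightarrow> nat \<Rightarrow> (nat \<Rightarrow> nat) \<Rightarrow> (nat \<Rightarrow> bool) \<Rightarrow> nat \<Rightarrow> bool" where
  "Ltot_mul N M L a = (\<lambda>r. \<exists>i<M. \<exists>j<N. nxt N L i j = r \<and> a j)"

definition LtotT_mul :: "nat \<Rightarrow> nat \<Rightarrow> (nat \<Rightarrow> nat) \<Rightarrow> (nat \<Rightarrow> bool) \<Rightarrow> nat \<Rightarrow> bool" where
  "LtotT_mul N M L b = (\<lambda>j. j < N \<and> (\<exists>i<M. b (nxt N L i j)))"

definition vvec :: "nat \<Rightarrow> (nat \<Rightarrow> nat) \<Rightarrow> (nat \<Rightarrow> nat) \<Rightarrow> nat \<Rightarrow> nat \<Rightarrow> bool" where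
  "vvec N H yr t = (\<lambda>j. j < N \<and> H j = yr t)"

fun alpha :: "nat \<Rightarrow> nat \<Rightarrow> (nat \<Rightarrow> nat) \<Rightarrow> (nat \<Rightarrow> nat) \<Rightarrow> (nat \<Rightarrow> nat) \<Rightarrow> nat \<Rightarrow> nat \<Rightarrow> bool" where
  "alpha N M L H yr 0 = (\<lambda>j. False)"
| "alpha N M L H yr (Suc 0) = vvec N H yr 1"
| "alpha N M L H yr (Suc (Suc t)) =
     (\<lambda>j. vvec N H yr (Suc (Suc t)) j \<and> Ltot_mul N M L (alpha N M L H yr (Suc t)) j)"

(* backward recursion: seq(T+1) = tp, seq(t) = prev(t) \<odot> (L_tot^T seq(t+1));
   bstep ... d is seq(T+1-d) *)
fun bstep :: "nat \<Rightarrow> nat \<Rightarrow> (nat \<Rightarrow> nat) \<Rightarrow> nat \<Rightarrow> (nat \<Rightarrow> nat \<Rightarrow> bool) \<Rightarrow> (nat \<Rightarrow> bool)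
              \<Rightarrow> nat \<Rightarrow> nat \<Rightarrow> bool" where
  "bstep N M L T prev tp 0 = tp"
| "bstep N M L T prev tp (Suc d) =
     (\<lambda>j. prev (T - d) j \<and> LtotT_mul N M L (bstep N M L T prev tp d) j)"

(* beta N M L H yr T k t = beta_k(t), for k >= 1 and t in [1, T+1] *)
fun beta :: "nat \<Rightarrow> nat \<Rightarrow> (nat \<Rightarrow> nat) \<Rightarrow> (nat \<Rightarrow> nat) \<Rightarrow> (nat \<Rightarrow> nat) \<Rightarrow> nat \<Rightarrow> nat
             \<Rightarrow> nat \<Rightarrow> nat \<Rightarrow> bool" where
  "beta N M L H yr T 0 = (\<lambda>t j. False)"
| "beta N M L H yr T (Suc 0) =
     (\<lambda>t. bstep N M L T (alpha N M L H yr) (alpha N M L H yr (T + 1)) (T + 1 - t))"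
| "beta N M L H yr T (Suc (Suc k)) =
     (\<lambda>t. bstep N M L T (beta N M L H yr T (Suc k))
           (\<lambda>j. beta N M L H yr T (Suc k) (T + 1) j \<and> beta N M L H yr T (Suc k) 1 j)
           (T + 1 - t))"

definition Xset :: "nat \<Rightarrow> nat \<Rightarrow> (nat \<Rightarrow> nat) \<Rightarrow> (nat \<Rightarrow> nat) \<Rightarrow> (nat \<Rightarrow> nat) \<Rightarrow> nat \<Rightarrow> nat
                    \<Rightarrow> nat \<Rightarrow> nat set" where
  "Xset N M L H yr T k t = {j. j < N \<and> beta N M L H yr T k t j}"

definition kstar :: "nat \<Rightarrow> nat \<Rightarrow> (nat \<Rightarrow> nat) \<Rightarrow> (nat \<Rightarrow> nat) \<Rightarrow> (nat \<Rightarrow> nat) \<Rightarrow> nat \<Rightarrow> nat" where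
  "kstar N M L H yr T = (LEAST k. 1 \<le> k \<and>
      (Xset N M L H yr T k (T + 1) \<subseteq> Xset N M L H yr T k 1 \<or> Xset N M L H yr T k 1 = {}))"

definition betastar :: "nat \<Rightarrow> nat \<Rightarrow> (nat \<Rightarrow> nat) \<Rightarrow> (nat \<Rightarrow> nat) \<Rightarrow> (nat \<Rightarrow> nat) \<Rightarrow> nat
                        \<Rightarrow> nat \<Rightarrow> nat \<Rightarrow> bool" where
  "betastar N M L H yr T = beta N M L H yr T (kstar N M L H yr T)"

definition Txu :: "nat \<Rightarrow> nat \<Rightarrow> (nat \<Rightarrow> nat) \<Rightarrow> (nat \<Rightarrow> nat) \<Rightarrow> (nat \<Rightarrow> nat) \<Rightarrow> nat \<Rightarrow> nat
                   \<Rightarrow> (nat \<times> nat) set" where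
  "Txu N M L H yr T t =
     (if t = 0 then {(j, i). j < N \<and> i < M \<and> betastar N M L H yr T 1 (nxt N L i j)}
      else {(j, i). j < N \<and> i < M \<and> betastar N M L H yr T t j
                  \<and> betastar N M L H yr T (t + 1) (nxt N L i j)})"

definition Tu :: "nat \<Rightarrow> nat \<Rightarrow> (nat \<Rightarrow> nat) \<Rightarrow> (nat \<Rightarrow> nat) \<Rightarrow> (nat \<Rightarrow> nat) \<Rightarrow> nat \<Rightarrow> nat
                  \<Rightarrow> nat \<Rightarrow> nat set" where
  "Tu N M L H yr T t x = {i. i < M \<and> (x, i) \<in> Txu N M L H yr T t}"

definition trackable :: "nat \<Rightarrow> nat \<Rightarrow> (nat \<Rightarrow> nat) \<Rightarrow> (nat \<Rightarrow> nat) \<Rightarrow> (nat \<Rightarrow> nat) \<Rightarrow> nat \<Rightarrow> bool" where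
  "trackable N M L H yr x0 =
     (\<exists>u. (\<forall>t. u t < M) \<and> (\<forall>t\<ge>1. H (traj N L x0 u t) = yr t))"

end

theory Submission
  imports Defs
begin


lemma bstep_step:
  assumes "1 \<le> t" "t \<le> T"
  shows "bstep N M L T prev tp (T+1-t) = (\<lambda>j. prev t j \<and> LtotT_mul N M L (bstep N M L T prev tp (T+1-(t+1))) j)"
proof -
  have e: "T+1-t = Suc (T-t)" using assms by simp
  have e2: "T - (T-t) = t" using assms by simp
  show ?thesis unfolding e using e2 by simp
qed

lemma beta1_step:
  assumes "1 \<le> t" "t \<le> T"
  shows "beta N M L H yr T (Suc 0) t j = (alpha N M L H yr t j \<and> LtotT_mul N M L (beta N M L H yr T (Suc 0) (t+1)) j)"
  using bstep_step[OF assms] by simp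

lemma betaSS_step:
  assumes "1 \<le> t" "t \<le> T"
  shows "beta N M L H yr T (Suc (Suc k)) t j = (beta N M L H yr T (Suc k) t j \<and> LtotT_mul N M L (beta N M L H yr T (Suc (Suc k)) (t+1)) j)"
  using bstep_step[OF assms] by simp

lemma beta1_top: "beta N M L H yr T (Suc 0) (T+1) = alpha N M L H yr (T+1)"
  by simp

lemma betaSS_top: "beta N M L H yr T (Suc (Suc k)) (T+1) j = (beta N M L H yr T (Suc k) (T+1) j \<and> beta N M L H yr T (Suc k) 1 j)"
  by simp

lemma beta_step:
  assumes "1 \<le> k" "1 \<le> t" "t \<le> T" "beta N M L H yr T k t j"
  shows "j < N \<and> (\<exists>i<M. beta N M L H yr T k (t+1) (nxt N L i j))"
proof -
  obtain k' where k: "k = Suc k'" using assms(1) by (cases k) auto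
  show ?thesis
  proof (cases k')
    case 0 then show ?thesis using assms beta1_step[OF assms(2,3)] k by (auto simp: LtotT_mul_def)
  next
    case (Suc k'') then show ?thesis using assms betaSS_step[OF assms(2,3)] k by (auto simp: LtotT_mul_def)
  qed
qed

lemma beta_sub_alpha:
  assumes "1 \<le> t" "t \<le> T+1"
  shows "beta N M L H yr T (Suc k) t j \<Longrightarrow> alpha N M L H yr t j"
proof (induction k)
  case 0
  then show ?case
  proof (cases "t = T+1")
    case True then show ?thesis using 0 by simp
  next
    case False then show ?thesis using 0 beta1_step[of t T] assms by auto
  qed
next
  case (Suc k)
  then show ?case
  proof (cases "t = T+1")
    case True then show ?thesis using Suc betaSS_top[of N M L H yr T k t] by simp
  next
    case False then show ?thesis using Suc betaSS_step[of t T] assms by auto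
  qed
qed

lemma alpha_v: assumes "1 \<le> t" "alpha N M L H yr t j" shows "j < N \<and> H j = yr t"
proof -
  obtain t' where t: "t = Suc t'" using assms(1) by (cases t) auto
  show ?thesis using assms t by (cases t') (auto simp: vvec_def)
qed

lemma beta_v: "1 \<le> k \<Longrightarrow> 1 \<le> t \<Longrightarrow> t \<le> T+1 \<Longrightarrow> beta N M L H yr T k t j \<Longrightarrow> j < N \<and> H j = yr t"
proof -
  assume a: "1 \<le> k" "1 \<le> t" "t \<le> T+1" "beta N M L H yr T k t j"
  obtain k' where k: "k = Suc k'" using a(1) by (cases k) auto
  show ?thesis using beta_sub_alpha[OF a(2,3)] a(4) k alpha_v[OF a(2)] by blast
qed

lemma nxt_lt:
  assumes "\<forall>c < N * M. L c < N" "i < M" "j < N"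
  shows "nxt N L i j < N"
proof -
  have "i * N + j < Suc i * N" using assms(3) by simp
  also have "\<dots> \<le> M * N" using assms(2) by (intro mult_right_mono) auto
  finally show ?thesis using assms(1) unfolding nxt_def by (simp add: mult.commute)
qed

lemma traj_lt:
  assumes "\<forall>c < N * M. L c < N" "\<forall>t. u t < M" "x0 < N"
  shows "traj N L x0 u t < N"
  by (induction t) (auto intro: nxt_lt[OF assms(1)] simp: assms)

lemma per_gen:
  fixes yr :: "nat \<Rightarrow> nat" and s t T :: nat
  assumes "\<forall>t \<ge> 1. yr (t + T) = yr t" "1 \<le> t"
  shows "yr (s*T + t) = yr t"
proof (induction s)
  case 0 then show ?case by simp
next
  case (Suc s)
  have "yr (Suc s * T + t) = yr ((s*T+t) + T)" by (simp add: algebra_simps)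
  also have "\<dots> = yr (s*T+t)" using assms by simp
  finally show ?case using Suc by simp
qed

lemma track_alpha:
  assumes Llog: "\<forall>c < N * M. L c < N" and per: "\<forall>t \<ge> 1. yr (t + T) = yr t"
    and x0: "x0 < N" and u: "\<forall>t. u t < M" and out: "\<forall>t\<ge>1. H (traj N L x0 u t) = yr t"
  shows "1 \<le> t \<Longrightarrow> alpha N M L H yr t (traj N L x0 u (s*T+t))"
proof (induction t)
  case 0 then show ?case by simp
next
  case (Suc t)
  let ?x = "traj N L x0 u"
  have xl: "?x (s*T + Suc t) < N" using traj_lt[OF Llog u x0] .
  have one: "1 \<le> s*T + Suc t" by simp
  have "H (?x (s*T + Suc t)) = yr (s*T + Suc t)" using out one by blast
  also have "\<dots> = yr (Suc t)" using per_gen[OF per, of "Suc t" s] by simp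
  finally have h: "vvec N H yr (Suc t) (?x (s*T + Suc t))" using xl unfolding vvec_def by blast
  show ?case
  proof (cases t)
    case 0 then show ?thesis using h by simp
  next
    case (Suc t'')
    have ih: "alpha N M L H yr t (?x (s*T+t))" using Suc.IH \<open>t = Suc t''\<close> by (simp only: le_add1 plus_1_eq_Suc[symmetric] simp_thms)
    have nx: "?x (s*T + Suc t) = nxt N L (u (s*T+t)) (?x (s*T+t))" by simp
    have "Ltot_mul N M L (alpha N M L H yr t) (?x (s*T + Suc t))"
      unfolding Ltot_mul_def nx using ih traj_lt[OF Llog u x0] u by blast
    then show ?thesis using h \<open>t = Suc t''\<close> by simp
  qed
qed

lemma track_beta:
  assumes Llog: "\<forall>c < N * M. L c < N" and per: "\<forall>t \<ge> 1. yr (t + T) = yr t"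
    and x0: "x0 < N" and u: "\<forall>t. u t < M" and out: "\<forall>t\<ge>1. H (traj N L x0 u t) = yr t"
    and T1: "1 \<le> T"
  shows "\<forall>s t. 1 \<le> t \<longrightarrow> t \<le> T+1 \<longrightarrow> beta N M L H yr T (Suc k) t (traj N L x0 u (s*T+t))"
proof -
  let ?x = "traj N L x0 u"
  have xl: "\<And>t. ?x t < N" using traj_lt[OF Llog u x0] .
  have nx: "\<And>s t. ?x (s*T+(t+1)) = nxt N L (u (s*T+t)) (?x (s*T+t))" by simp
  have LT: "LtotT_mul N M L b (?x (s*T+t))" if "b (?x (s*T+(t+1)))" for b s t
    using that unfolding LtotT_mul_def nx using xl[of "s*T+t"] u by blast
  show ?thesis
  proof (induction k)
    case 0
    have "\<forall>t s. t + d = T+1 \<longrightarrow> 1 \<le> t \<longrightarrow> beta N M L H yr T (Suc 0) t (?x (s*T+t))" for d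
    proof (induction d)
      case 0 show ?case
      proof (intro allI impI)
        fix t s assume "t + 0 = T+1" "1 \<le> t"
        then have t: "t = T+1" by simp
        have "alpha N M L H yr (T+1) (?x (s*T+(T+1)))" by (rule track_alpha[OF assms(1-5) le_add2])
        then show "beta N M L H yr T (Suc 0) t (?x (s*T+t))" unfolding t beta1_top .
      qed
    next
      case (Suc d) show ?case
      proof (intro allI impI)
        fix t s assume h: "t + Suc d = T+1" "1 \<le> t"
        have h1: "(t+1) + d = T+1" "1 \<le> t+1" "t \<le> T" using h by auto
        have "beta N M L H yr T (Suc 0) (t+1) (?x (s*T+(t+1)))" using Suc.IH[rule_format, OF h1(1,2)] .
        then have "LtotT_mul N M L (beta N M L H yr T (Suc 0) (t+1)) (?x (s*T+t))" by (rule LT)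
        then show "beta N M L H yr T (Suc 0) t (?x (s*T+t))"
          unfolding beta1_step[OF h(2) h1(3)] using track_alpha[OF assms(1-5) h(2)] by (intro conjI)
      qed
    qed
    note * = this
    show ?case
    proof (intro allI impI)
      fix s t :: nat assume "1 \<le> t" "t \<le> T+1"
      then have "t + (T+1-t) = T+1" by simp
      then show "beta N M L H yr T (Suc 0) t (?x (s*T+t))" using * \<open>1 \<le> t\<close> by blast
    qed
  next
    case (Suc k)
    note outer = Suc.IH
    have "\<forall>t s. t + d = T+1 \<longrightarrow> 1 \<le> t \<longrightarrow> beta N M L H yr T (Suc (Suc k)) t (?x (s*T+t))" for d
    proof (induction d)
      case 0 show ?case
      proof (intro allI impI)
        fix t s assume "t + 0 = T+1" "1 \<le> t"
        then have t: "t = T+1" by simp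
        have a: "beta N M L H yr T (Suc k) (T+1) (?x (s*T+(T+1)))" by (rule outer[rule_format]) auto
        have b: "beta N M L H yr T (Suc k) 1 (?x (Suc s*T+1))" by (rule outer[rule_format]) (auto simp: T1)
        have "Suc s * T + 1 = s*T + (T+1)" by simp
        then have b': "beta N M L H yr T (Suc k) 1 (?x (s*T+(T+1)))" using b by (simp only:)
        show "beta N M L H yr T (Suc (Suc k)) t (?x (s*T+t))" unfolding t betaSS_top using a b' by blast
      qed
    next
      case (Suc d) show ?case
      proof (intro allI impI)
        fix t s assume h: "t + Suc d = T+1" "1 \<le> t"
        have h1: "(t+1) + d = T+1" "1 \<le> t+1" "t \<le> T" using h by auto
        have h2: "t \<le> T+1" using h by linarith
        have "beta N M L H yr T (Suc (Suc k)) (t+1) (?x (s*T+(t+1)))" using Suc.IH[rule_format, OF h1(1,2)] .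
        then have "LtotT_mul N M L (beta N M L H yr T (Suc (Suc k)) (t+1)) (?x (s*T+t))" by (rule LT)
        moreover have "beta N M L H yr T (Suc k) t (?x (s*T+t))" using outer[rule_format, OF h(2) h2] .
        ultimately show "beta N M L H yr T (Suc (Suc k)) t (?x (s*T+t))"
          unfolding betaSS_step[OF h(2) h1(3)] by (intro conjI)
      qed
    qed
    note * = this
    show ?case
    proof (intro allI impI)
      fix s t :: nat assume "1 \<le> t" "t \<le> T+1"
      then have "t + (T+1-t) = T+1" by simp
      then show "beta N M L H yr T (Suc (Suc k)) t (?x (s*T+t))" using * \<open>1 \<le> t\<close> by blast
    qed
  qed
qed



lemma Xset_le: "Xset N M L H yr T k t \<subseteq> {..<N}"
  unfolding Xset_def by auto

lemma Xset_next:
  "Xset N M L H yr T (Suc (Suc k)) (T+1) = Xset N M L H yr T (Suc k) (T+1) \<inter> Xset N M L H yr T (Suc k) 1"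
  unfolding Xset_def betaSS_top by blast

lemma kstar_exists:
  "\<exists>k. 1 \<le> k \<and> (Xset N M L H yr T k (T + 1) \<subseteq> Xset N M L H yr T k 1 \<or> Xset N M L H yr T k 1 = {})"
proof (rule ccontr)
  assume na: "\<not> ?thesis"
  let ?f = "\<lambda>k. card (Xset N M L H yr T (Suc k) (T+1))"
  have fin: "finite (Xset N M L H yr T k t)" for k t by (rule finite_subset[OF Xset_le finite_lessThan])
  have dec: "?f (Suc k) < ?f k" for k
  proof -
    have "\<not> Xset N M L H yr T (Suc k) (T + 1) \<subseteq> Xset N M L H yr T (Suc k) 1"
      using spec[OF na[unfolded not_ex], of "Suc k"] by simp
    then have "Xset N M L H yr T (Suc (Suc k)) (T+1) \<subset> Xset N M L H yr T (Suc k) (T+1)"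
      unfolding Xset_next by blast
    then show ?thesis using fin by (rule psubset_card_mono[rotated])
  qed
  have fk: "?f k + k \<le> ?f 0" for k
  proof (induction k)
    case 0 then show ?case by simp
  next
    case (Suc k) then show ?case using dec[of k] by linarith
  qed
  have "?f 0 \<le> card {..<N}" by (rule card_mono[OF finite_lessThan Xset_le])
  then have "?f 0 \<le> N" by (simp only: card_lessThan)
  then have "?f (Suc N) + Suc N \<le> N" using fk[of "Suc N"] by linarith
  then show False by simp
qed

lemma mod_pred:
  assumes "1 \<le> (T::nat)"
  shows "(Suc t' mod T = 0 \<longrightarrow> t' mod T + 1 = T) \<and> (Suc t' mod T \<noteq> 0 \<longrightarrow> Suc t' mod T = t' mod T + 1)"
  using mod_Suc[of t' T] by auto

lemma main_gen:
  fixes N M T x0 :: nat and L H yr :: "nat \<Rightarrow> nat"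
  assumes L_log: "\<forall>c < N * M. L c < N"
      and T_pos: "1 \<le> T"
      and yr_per: "\<forall>t \<ge> 1. yr (t + T) = yr t"
      and x0_st: "x0 < N"
      and track: "trackable N M L H yr x0"
  shows "(\<forall>u t. (\<forall>s < t. u s \<in> Tu N M L H yr T (s mod T) (traj N L x0 u s))
               \<longrightarrow> Tu N M L H yr T (t mod T) (traj N L x0 u t) \<noteq> {})
       \<and> (\<forall>u. (\<forall>t. u t \<in> Tu N M L H yr T (t mod T) (traj N L x0 u t))
               \<longrightarrow> (\<forall>t \<ge> 1. H (traj N L x0 u t) = yr t))"
proof -
  obtain u0 where u0: "\<forall>t. u0 t < M" "\<forall>t\<ge>1. H (traj N L x0 u0 t) = yr t"
    using track unfolding trackable_def by blast
  note TB = track_beta[OF L_log yr_per x0_st u0(1) u0(2) T_pos]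
  define ks where "ks = kstar N M L H yr T"
  have ksp: "1 \<le> ks \<and> (Xset N M L H yr T ks (T + 1) \<subseteq> Xset N M L H yr T ks 1 \<or> Xset N M L H yr T ks 1 = {})"
    unfolding ks_def kstar_def by (rule LeastI_ex[OF kstar_exists])
  then obtain k' where k': "ks = Suc k'" by (cases ks) auto
  define bb where "bb = beta N M L H yr T ks"
  have bs: "betastar N M L H yr T = bb" unfolding bb_def ks_def betastar_def ..
  have "1 \<le> (1::nat)" "1 \<le> T + 1" by simp_all
  from TB[of k', rule_format, OF this, of 0]
  have B0: "beta N M L H yr T (Suc k') 1 (traj N L x0 u0 (0*T+1))" .
  have e1: "0*T+1 = (1::nat)" by simp
  have e2: "traj N L x0 u0 1 = nxt N L (u0 0) x0" by simp
  have B1: "bb 1 (nxt N L (u0 0) x0)" using B0[unfolded e1 e2] unfolding bb_def k' .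
  have nl: "nxt N L (u0 0) x0 < N" using nxt_lt[OF L_log u0(1)[rule_format] x0_st] .
  have "Xset N M L H yr T ks 1 \<noteq> {}" using B1 nl unfolding Xset_def bb_def by blast
  then have sub: "Xset N M L H yr T ks (T + 1) \<subseteq> Xset N M L H yr T ks 1" using ksp by blast
  have clos: "bb 1 j" if "bb (T+1) j" for j
  proof -
    have "j < N \<and> H j = yr (T+1)" by (rule beta_v[OF conjunct1[OF ksp] _ _ that[unfolded bb_def]]) simp_all
    then have "j < N" ..
    then show ?thesis using sub that unfolding Xset_def bb_def by blast
  qed
  have stp: "j < N \<and> (\<exists>i<M. bb (r+1) (nxt N L i j))" if "1 \<le> r" "r \<le> T" "bb r j" for r j
    using beta_step[of ks r T] ksp that unfolding bb_def by blast
  have inv: "bb (t' mod T + 1) (traj N L x0 u (Suc t'))"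
    if "u t' \<in> Tu N M L H yr T (t' mod T) (traj N L x0 u t')" for u t'
  proof (cases "t' mod T = 0")
    case True then show ?thesis using that unfolding Tu_def Txu_def bs by simp
  next
    case False then show ?thesis using that unfolding Tu_def Txu_def bs by simp
  qed
  have ne: "Tu N M L H yr T (Suc t' mod T) (traj N L x0 u (Suc t')) \<noteq> {}"
    if bx: "bb (t' mod T + 1) (traj N L x0 u (Suc t'))" for u t'
  proof -
    let ?y = "traj N L x0 u (Suc t')"
    have r: "1 \<le> t' mod T + 1" "t' mod T + 1 \<le> T" using T_pos by (auto simp: Suc_le_eq)
    obtain i where i: "i < M" "bb (t' mod T + 1 + 1) (nxt N L i ?y)" and yl: "?y < N"
      using stp[OF r bx] by blast
    show ?thesis
    proof (cases "Suc t' mod T = 0")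
      case True
      then have "t' mod T + 1 = T" using mod_pred[OF T_pos, of t'] by argo
      then have "bb 1 (nxt N L i ?y)" using i clos by simp
      then have "i \<in> Tu N M L H yr T (Suc t' mod T) ?y" using True i yl unfolding Tu_def Txu_def bs by simp
      then show ?thesis by blast
    next
      case False
      then have e: "Suc t' mod T = t' mod T + 1" using mod_pred[OF T_pos, of t'] by argo
      have "i \<in> Tu N M L H yr T (Suc t' mod T) ?y" using False i yl bx unfolding Tu_def Txu_def bs e by simp
      then show ?thesis by blast
    qed
  qed
  have part1: "Tu N M L H yr T (t mod T) (traj N L x0 u t) \<noteq> {}"
    if "\<forall>s < t. u s \<in> Tu N M L H yr T (s mod T) (traj N L x0 u s)" for u t
  proof (cases t)
    case 0
    have "u0 0 \<in> Tu N M L H yr T 0 x0" using B1 x0_st u0(1) unfolding Tu_def Txu_def bs by simp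
    then show ?thesis using 0 by auto
  next
    case (Suc t')
    then show ?thesis using ne inv that by blast
  qed
  have part2: "H (traj N L x0 u t) = yr t"
    if tu: "\<forall>t. u t \<in> Tu N M L H yr T (t mod T) (traj N L x0 u t)" and t1: "1 \<le> t" for u t
  proof -
    obtain t' where t: "t = Suc t'" using t1 by (cases t) auto
    have b: "bb (t' mod T + 1) (traj N L x0 u t)" using inv tu t by blast
    have r: "1 \<le> t' mod T + 1" "t' mod T + 1 \<le> T + 1" using T_pos by auto
    have "H (traj N L x0 u t) = yr (t' mod T + 1)" using beta_v[OF _ r] ksp b unfolding bb_def by blast
    also have "\<dots> = yr ((t' div T) * T + (t' mod T + 1))" using per_gen[OF yr_per r(1), of "t' div T"] by simp
    also have "(t' div T) * T + (t' mod T + 1) = t" using t by simp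
    finally show ?thesis .
  qed
  show ?thesis using part1 part2 by blast
qed

theorem corollary2:
  fixes n m p T x0 :: nat and L H yr :: "nat \<Rightarrow> nat"
  defines "N \<equiv> 2 ^ n" and "M \<equiv> 2 ^ m" and "P \<equiv> 2 ^ p"
  assumes L_log: "\<forall>c < N * M. L c < N"
      and H_log: "\<forall>j < N. H j < P"
      and T_pos: "1 \<le> T"
      and yr_range: "\<forall>t \<ge> 1. yr t < P"
      and yr_per: "\<forall>t \<ge> 1. yr (t + T) = yr t"
      and yr_min: "\<forall>T'. 1 \<le> T' \<and> T' < T \<longrightarrow> \<not> (\<forall>t \<ge> 1. yr (t + T') = yr t)"
      and x0_st: "x0 < N"
      and track: "trackable N M L H yr x0"
  shows "(\<forall>u t. (\<forall>s < t. u s \<in> Tu N M L H yr T (s mod T) (traj N L x0 u s))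
               \<longrightarrow> Tu N M L H yr T (t mod T) (traj N L x0 u t) \<noteq> {})
       \<and> (\<forall>u. (\<forall>t. u t \<in> Tu N M L H yr T (t mod T) (traj N L x0 u t))
               \<longrightarrow> (\<forall>t \<ge> 1. H (traj N L x0 u t) = yr t))"
  using main_gen[OF L_log T_pos yr_per x0_st track] by simp

end
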